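(* Let $P$ be a basic program. Every answer set by complement of $P$ is an answer set by reduct of $P$. Moreover, if $P$ is naf-monotone, then every answer set by reduct of $P$ is an answer set by complement of $P$.
   Context: Fix a countable set $\mathcal{A}$ of atoms. A c-atom is $A=(A_d,A_c)$, $A_d\subseteq\mathcal{A}$, $A_c\subseteq 2^{A_d}$; $(\{p\},\{\{p\}\})$ is the elementary c-atom $p$; $\bot=(\mathcal{A},\emptyset)$. $A$ is monotone if $X\subseteq Y\subseteq A_d$ and $X\in A_c$ imply $Y\in A_c$. A rule: $A\leftarrow A_1,\dots,A_k,\mathit{not}\,A_{k+1},\dots,\mathit{not}\,A_n$; $head(r)=A$, $pos(r)=\{A_1,\dots,A_k\}$, $neg(r)=\{A_{k+1},\dots,A_n\}$. Program = set of rules; positive if all $neg(r)=\emptyset$; basic if every head is elementary or $\bot$; naf-monotone if every c-atom in some $neg(r)$ is monotone. $S\models A$ iff $S\cap A_d\in A_c$; $S\models\mathit{not}\,A$ iff $S\cap A_d\notin A_c$; rule satisfied if head satisfied or some body element not satisfied; model = satisfies all rules. Conditional satisfaction: $S\models_M A$ iff $S\models A$ and every $I$ with $S\cap A_d\subseteq I\subseteq M\cap A_d$ lies in $A_c$. For positive basic $P$: $T_P(S,M)=\{a\mid \exists r\in P,\ head(r)=(\{a\},\{\{a\}\}),\ S\models_M B\ \forall B\in pos(r)\}$, $T^0_P(\emptyset,M)=\emptyset$, $T^{i+1}_P(\emptyset,M)=T_P(T^i_P(\emptyset,M),M)$, $T^\infty_P(\emptyset,M)=\bigcup_i T^i_P(\emptyset,M)$;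 a model $M$ of $P$ is an answer set iff $M=T^\infty_P(\emptyset,M)$. The complement of $A$ is $\bar A=(A_d,2^{A_d}\setminus A_c)$; $\mathcal{C}(P)$ is obtained from $P$ by replacing each $\mathit{not}\,A$ by $\bar A$; $M$ is an answer set by complement of basic $P$ iff it is an answer set of $\mathcal{C}(P)$. The reduct $P^M$ is obtained by deleting every rule having some $\mathit{not}\,A$ in its body with $M\models A$, and deleting all naf-literals from the remaining rules; $M$ is an answer set by reduct of $P$ iff it is an answer set of $P^M$. *)

theory Defs
  imports Main "HOL-Library.Countable"
begin

text \<open>Atoms are the elements of a countable type 'a (the universe is the set of atoms).
A c-atom is a pair (A_d, A_c) with A_d a set of atoms and A_c a set of subsets of A_d.\<close>

type_synonym 'a catom = "'a set \<times> 'a set set"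

definition wf_catom :: "'a catom \<Rightarrow> bool" where
  "wf_catom A \<longleftrightarrow> snd A \<subseteq> Pow (fst A)"

definition elem :: "'a \<Rightarrow> 'a catom" where
  "elem p = ({p}, {{p}})"

definition bot_catom :: "'a catom" where
  "bot_catom = (UNIV, {})"

definition monotone_catom :: "'a catom \<Rightarrow> bool" where
  "monotone_catom A \<longleftrightarrow> (\<forall>X Y. X \<subseteq> Y \<and> Y \<subseteq> fst A \<and> X \<in> snd A \<longrightarrow> Y \<in> snd A)"

datatype 'a rule = Rule (head: "'a catom") (pos: "'a catom list") (neg: "'a catom list")

type_synonym 'a program = "'a rule set"

definition sat :: "'a set \<Rightarrow> 'a catom \<Rightarrow> bool" where
  "sat S A \<longleftrightarrow> S \<inter> fst A \<in> snd A"

definition sat_body :: "'a set \<Rightarrow> 'a rule \<Rightarrow> bool" where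
  "sat_body S r \<longleftrightarrow> (\<forall>A\<in>set (pos r). sat S A) \<and> (\<forall>A\<in>set (neg r). \<not> sat S A)"

definition sat_rule :: "'a set \<Rightarrow> 'a rule \<Rightarrow> bool" where
  "sat_rule S r \<longleftrightarrow> sat S (head r) \<or> \<not> sat_body S r"

definition is_model :: "'a set \<Rightarrow> 'a program \<Rightarrow> bool" where
  "is_model M P \<longleftrightarrow> (\<forall>r\<in>P. sat_rule M r)"

definition wf_program :: "'a program \<Rightarrow> bool" where
  "wf_program P \<longleftrightarrow> (\<forall>r\<in>P. wf_catom (head r) \<and> (\<forall>A\<in>set (pos r) \<union> set (neg r). wf_catom A))"

definition positive_program :: "'a program \<Rightarrow> bool" where
  "positive_program P \<longleftrightarrow> (\<forall>r\<in>P. neg r = [])"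

definition basic_program :: "'a program \<Rightarrow> bool" where
  "basic_program P \<longleftrightarrow> (\<forall>r\<in>P. (\<exists>a. head r = elem a) \<or> head r = bot_catom)"

definition naf_monotone :: "'a program \<Rightarrow> bool" where
  "naf_monotone P \<longleftrightarrow> (\<forall>r\<in>P. \<forall>A\<in>set (neg r). monotone_catom A)"

definition csat :: "'a set \<Rightarrow> 'a set \<Rightarrow> 'a catom \<Rightarrow> bool" where
  "csat S M A \<longleftrightarrow> sat S A \<and> (\<forall>I. S \<inter> fst A \<subseteq> I \<and> I \<subseteq> M \<inter> fst A \<longrightarrow> I \<in> snd A)"

definition TP :: "'a program \<Rightarrow> 'a set \<Rightarrow> 'a set \<Rightarrow> 'a set" where
  "TP P M S = {a. \<exists>r\<in>P. head r = elem a \<and> (\<forall>B\<in>set (pos r). csat S M B)}"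

definition TP_inf :: "'a program \<Rightarrow> 'a set \<Rightarrow> 'a set" where
  "TP_inf P M = (\<Union>i. ((\<lambda>S. TP P M S) ^^ i) {})"

definition answer_set_pos :: "'a program \<Rightarrow> 'a set \<Rightarrow> bool" where
  "answer_set_pos P M \<longleftrightarrow> is_model M P \<and> M = TP_inf P M"

definition compl_catom :: "'a catom \<Rightarrow> 'a catom" where
  "compl_catom A = (fst A, Pow (fst A) - snd A)"

definition C_prog :: "'a program \<Rightarrow> 'a program" where
  "C_prog P = (\<lambda>r. Rule (head r) (pos r @ map compl_catom (neg r)) []) ` P"

definition reduct :: "'a program \<Rightarrow> 'a set \<Rightarrow> 'a program" where
  "reduct P M = {Rule (head r) (pos r) [] | r. r \<in> P \<and> (\<forall>A\<in>set (neg r). \<not> sat M A)}"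

definition answer_set_compl :: "'a program \<Rightarrow> 'a set \<Rightarrow> bool" where
  "answer_set_compl P M \<longleftrightarrow> answer_set_pos (C_prog P) M"

definition answer_set_reduct :: "'a program \<Rightarrow> 'a set \<Rightarrow> bool" where
  "answer_set_reduct P M \<longleftrightarrow> answer_set_pos (reduct P M) M"

end

theory Submission
  imports Defs
begin

lemma csat_sat: "S \<subseteq> M \<Longrightarrow> csat S M B \<Longrightarrow> sat M B"
  unfolding csat_def sat_def by (meson Int_mono order_refl)

lemma csat_mono: "S \<subseteq> S' \<Longrightarrow> S' \<subseteq> M \<Longrightarrow> csat S M B \<Longrightarrow> csat S' M B"
  unfolding csat_def sat_def by (meson Int_mono order_refl order_trans)

lemma TP_mono: "S \<subseteq> S' \<Longrightarrow> S' \<subseteq> M \<Longrightarrow> TP Q M S \<subseteq> TP Q M S'"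
  unfolding TP_def using csat_mono by (smt (verit) Ball_def Collect_mono)

lemma TP_model:
  assumes m: "is_model M Q" and p: "\<forall>r\<in>Q. neg r = []" and s: "S \<subseteq> M"
  shows "TP Q M S \<subseteq> M"
proof
  fix a assume a: "a \<in> TP Q M S"
  then obtain r where r: "r \<in> Q" "head r = elem a" "\<forall>B\<in>set (pos r). csat S M B"
    unfolding TP_def by blast
  have "sat_rule M r" using m r unfolding is_model_def by blast
  moreover have "\<forall>B\<in>set (pos r). sat M B" using r s csat_sat by blast
  moreover have "neg r = []" using p r by blast
  ultimately have "sat M (elem a)" using r unfolding sat_rule_def sat_body_def by auto
  thus "a \<in> M" unfolding sat_def elem_def by auto
qed

lemma iter_sub:
  assumes m: "is_model M Q2" and p: "\<forall>r\<in>Q2. neg r = []"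
    and c: "\<And>S. S \<subseteq> M \<Longrightarrow> TP Q1 M S \<subseteq> TP Q2 M S"
  shows "((\<lambda>S. TP Q1 M S) ^^ i) {} \<subseteq> ((\<lambda>S. TP Q2 M S) ^^ i) {}
         \<and> ((\<lambda>S. TP Q2 M S) ^^ i) {} \<subseteq> M"
proof (induction i)
  case 0 then show ?case by simp
next
  case (Suc i)
  let ?A = "((\<lambda>S. TP Q1 M S) ^^ i) {}" and ?B = "((\<lambda>S. TP Q2 M S) ^^ i) {}"
  have "TP Q1 M ?A \<subseteq> TP Q2 M ?A" using c Suc by blast
  also have "\<dots> \<subseteq> TP Q2 M ?B" using TP_mono Suc by blast
  finally show ?case using TP_model[OF m p, of ?B] Suc by simp
qed

lemma transfer:
  assumes a: "answer_set_pos Q1 M" and m: "is_model M Q2" and p: "\<forall>r\<in>Q2. neg r = []"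
    and c: "\<And>S. S \<subseteq> M \<Longrightarrow> TP Q1 M S \<subseteq> TP Q2 M S"
  shows "answer_set_pos Q2 M"
proof -
  have e: "M = TP_inf Q1 M" using a unfolding answer_set_pos_def by blast
  have "TP_inf Q1 M \<subseteq> TP_inf Q2 M" "TP_inf Q2 M \<subseteq> M"
    using iter_sub[OF m p c] unfolding TP_inf_def by blast+
  thus ?thesis using e m unfolding answer_set_pos_def by blast
qed

lemma sat_compl: "wf_catom A \<Longrightarrow> sat M (compl_catom A) \<longleftrightarrow> \<not> sat M A"
  unfolding sat_def compl_catom_def wf_catom_def by auto

theorem proposition2:
  fixes P :: "('a::countable) program"
  assumes "wf_program P" and "basic_program P"
  shows "(\<forall>M. answer_set_compl P M \<longrightarrow> answer_set_reduct P M)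
       \<and> (naf_monotone P \<longrightarrow> (\<forall>M. answer_set_reduct P M \<longrightarrow> answer_set_compl P M))"
proof (intro conjI allI impI)
  have wf: "\<And>r A. r \<in> P \<Longrightarrow> A \<in> set (neg r) \<Longrightarrow> wf_catom A"
    using assms(1) unfolding wf_program_def by blast
  have pr: "\<forall>r\<in>reduct P M. neg r = []" for M unfolding reduct_def by auto
  have pc: "\<forall>r\<in>C_prog P. neg r = []" unfolding C_prog_def by auto
  fix M
  {
    assume a: "answer_set_compl P M"
    hence mc: "is_model M (C_prog P)" unfolding answer_set_compl_def answer_set_pos_def by blast
    have mr: "is_model M (reduct P M)"
      unfolding is_model_def
    proof
      fix r' assume "r' \<in> reduct P M"
      then obtain r where r: "r' = Rule (head r) (pos r) []" "r \<in> P" "\<forall>A\<in>set (neg r). \<not> sat M A"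
        unfolding reduct_def by blast
      have "sat_rule M (Rule (head r) (pos r @ map compl_catom (neg r)) [])"
        using mc r(2) unfolding is_model_def C_prog_def by blast
      moreover have "\<forall>A\<in>set (neg r). sat M (compl_catom A)" using r(2,3) sat_compl wf by metis
      ultimately show "sat_rule M r'" using r(1) unfolding sat_rule_def sat_body_def by auto
    qed
    have c: "TP (C_prog P) M S \<subseteq> TP (reduct P M) M S" if s: "S \<subseteq> M" for S
    proof
      fix a assume "a \<in> TP (C_prog P) M S"
      then obtain r where r: "r \<in> P" "head r = elem a"
        "\<forall>B\<in>set (pos r @ map compl_catom (neg r)). csat S M B"
        unfolding TP_def C_prog_def by auto
      have "\<not> sat M A" if A: "A \<in> set (neg r)" for A
      proof -
        have "csat S M (compl_catom A)" using r A by auto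
        hence "sat M (compl_catom A)" using csat_sat s by metis
        thus ?thesis using sat_compl[OF wf[OF r(1) A]] by simp
      qed
      hence rr: "Rule (head r) (pos r) [] \<in> reduct P M" using r unfolding reduct_def by blast
      have pp: "\<forall>B\<in>set (pos r). csat S M B" using r(3) by simp
      show "a \<in> TP (reduct P M) M S" unfolding TP_def
        using r(2) pp by (intro CollectI bexI[OF _ rr]) simp
    qed
    show "answer_set_reduct P M" unfolding answer_set_reduct_def
      using transfer[OF _ mr pr c] a unfolding answer_set_compl_def by blast
  }
  {
    assume nm: "naf_monotone P" and a: "answer_set_reduct P M"
    hence mr: "is_model M (reduct P M)" unfolding answer_set_reduct_def answer_set_pos_def by blast
    have mc: "is_model M (C_prog P)"
      unfolding is_model_def
    proof
      fix r' assume "r' \<in> C_prog P"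
      then obtain r where r: "r' = Rule (head r) (pos r @ map compl_catom (neg r)) []" "r \<in> P"
        unfolding C_prog_def by blast
      show "sat_rule M r'"
      proof (cases "\<forall>A\<in>set (neg r). \<not> sat M A")
        case True
        hence "Rule (head r) (pos r) [] \<in> reduct P M" using r unfolding reduct_def by blast
        hence "sat_rule M (Rule (head r) (pos r) [])" using mr unfolding is_model_def by blast
        thus ?thesis using r(1) unfolding sat_rule_def sat_body_def by auto
      next
        case False
        then obtain A where "A \<in> set (neg r)" "sat M A" by blast
        hence "\<not> sat M (compl_catom A)" using sat_compl[OF wf[OF r(2)]] by simp
        thus ?thesis using r(1) \<open>A \<in> set (neg r)\<close> unfolding sat_rule_def sat_body_def by auto
      qed
    qed
    have c: "TP (reduct P M) M S \<subseteq> TP (C_prog P) M S" if s: "S \<subseteq> M" for S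
    proof
      fix a assume "a \<in> TP (reduct P M) M S"
      then obtain r where r: "r \<in> P" "head r = elem a" "\<forall>A\<in>set (neg r). \<not> sat M A"
        "\<forall>B\<in>set (pos r). csat S M B"
        unfolding TP_def reduct_def by auto
      have "csat S M (compl_catom A)" if A: "A \<in> set (neg r)" for A
      proof -
        have mo: "monotone_catom A" using nm r A unfolding naf_monotone_def by blast
        have nM: "M \<inter> fst A \<notin> snd A" using r A unfolding sat_def by blast
        have ni: "I \<notin> snd A" if "I \<subseteq> M \<inter> fst A" for I
          using mo nM that unfolding monotone_catom_def by (meson Int_lower2)
        have "S \<inter> fst A \<notin> snd A" using ni s by (meson Int_mono order_refl)
        thus ?thesis using ni unfolding csat_def sat_def compl_catom_def by auto
      qed
      hence pp: "\<forall>B\<in>set (pos r @ map compl_catom (neg r)). csat S M B" using r by auto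
      have rr: "Rule (head r) (pos r @ map compl_catom (neg r)) [] \<in> C_prog P"
        using r(1) unfolding C_prog_def by blast
      show "a \<in> TP (C_prog P) M S" unfolding TP_def
        using r(2) pp by (intro CollectI bexI[OF _ rr]) simp
    qed
    show "answer_set_compl P M" unfolding answer_set_compl_def
      using transfer[OF _ mc pc c] a unfolding answer_set_reduct_def by blast
  }
qed

end
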